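(* Consider MINTIME under the independent cascade model with budget $k$ and coverage threshold $\eta$, and let $R_{\mathit{OPT}}$ be the optimal propagation time. Let $\epsilon>0$, use coverage threshold $\eta-\epsilon$ and budget threshold $k(1+\ln(\eta/\epsilon))$. If the coverage function $\sigma^R(\cdot)$ can be computed exactly, then there is a greedy algorithm (greedy seed selection for coverage within $R$ steps, combined with a linear search over $R=0,\dots,n-1$) that approximates MINTIME within an $(\alpha,\beta,\gamma)$ factor with $\alpha=1$, $\beta=1+\ln(\eta/\epsilon)$ and $\gamma=1-\epsilon/\eta$, i.e., it outputs $S$ and $R$ with $|S|\le\beta k$, $R\le\alpha R_{\mathit{OPT}}$ and $\sigma^R(S)\ge\gamma\eta$. Furthermore, for every $\phi>0$ there is a $\delta>0$ such that, using $(1-\delta)$-approximate values of $\sigma^R(\cdot)$, the greedy algorithm approximates MINTIME within an $(\alpha,\beta,\gamma)$ factor with $\alpha=1$, $\beta=(1+\phi)(1+\ln(\eta/\epsilon))$ and $\gamma=1-\epsilon/\eta$.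
   Context: Independent cascade (IC) model on a directed graph $G=(V,E)$, $n=|V|$, with arc probabilities $p_{v,u}$: seed nodes are active at time $0$; when a node $v$ becomes active at time $t$, it has one chance to activate each inactive out-neighbour $u$, succeeding independently with probability $p_{v,u}$, in which case $u$ becomes active at time $t+1$. $\sigma^R(S)$ denotes the expected number of nodes active by time $R$ with seed set $S$. MINTIME: given $G$, an integer $k$ and a real $\eta\le|V|$, find $S\subseteq V$ with $|S|\le k$ and the smallest $t\in\mathbb{N}$ with $\sigma^t(S)\ge\eta$; $R_{\mathit{OPT}}$ is this smallest $t$. The greedy step for fixed $R$: start with $S=\emptyset$ and, while $\sigma^R(S)<\eta-\epsilon$, add a node $w\notin S$ maximizing $\min(\sigma^R(S\cup\{w\}),\eta)-\sigma^R(S)$. Using $(1-\delta)$-approximate values means replacing $\sigma^R$ by an estimate $\sigma'$ with $(1-\delta)\sigma^R(S)\le\sigma'(S)\le\sigma^R(S)$ for all $S$. *)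

theory Defs
  imports Complex_Main
begin

text \<open>Randomness of the IC process: every arc e is equipped with an independent
coin that succeeds with probability p e.  W is the set of arcs whose coin succeeds.
The coin of arc (v,u) is only consulted when v becomes active (exactly once), so
the process is faithfully simulated by sampling all coins up front.
ic_state W S t = (set of nodes active by time t, set of nodes activated exactly at time t).\<close>

fun ic_state :: "('a \<times> 'a) set \<Rightarrow> 'a set \<Rightarrow> nat \<Rightarrow> 'a set \<times> 'a set" where
  "ic_state W S 0 = (S, S)"
| "ic_state W S (Suc t) =
     (let A = fst (ic_state W S t);
          F = snd (ic_state W S t);
          N = {u. \<exists>v\<in>F. (v, u) \<in> W} - A
      in (A \<union> N, N))"

definition active_by :: "('a \<times> 'a) set \<Rightarrow> 'a set \<Rightarrow> nat \<Rightarrow> 'a set" where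
  "active_by W S t = fst (ic_state W S t)"

definition world_prob :: "('a \<times> 'a) set \<Rightarrow> ('a \<times> 'a \<Rightarrow> real) \<Rightarrow> ('a \<times> 'a) set \<Rightarrow> real" where
  "world_prob E p W = (\<Prod>e\<in>W. p e) * (\<Prod>e\<in>E - W. 1 - p e)"

definition sigma :: "('a \<times> 'a) set \<Rightarrow> ('a \<times> 'a \<Rightarrow> real) \<Rightarrow> nat \<Rightarrow> 'a set \<Rightarrow> real" where
  "sigma E p R S = (\<Sum>W\<in>Pow E. world_prob E p W * real (card (active_by W S R)))"

definition R_opt :: "'a set \<Rightarrow> ('a \<times> 'a) set \<Rightarrow> ('a \<times> 'a \<Rightarrow> real) \<Rightarrow> nat \<Rightarrow> real \<Rightarrow> nat" where
  "R_opt V E p k \<eta> = (LEAST t. \<exists>S\<subseteq>V. card S \<le> k \<and> \<eta> \<le> sigma E p t S)"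

definition gain :: "('a set \<Rightarrow> real) \<Rightarrow> real \<Rightarrow> 'a set \<Rightarrow> 'a \<Rightarrow> real" where
  "gain f \<eta> S w = min (f (insert w S)) \<eta> - f S"

definition greedy_choices :: "('a set \<Rightarrow> real) \<Rightarrow> real \<Rightarrow> 'a set \<Rightarrow> 'a set \<Rightarrow> 'a set" where
  "greedy_choices f \<eta> V S = {w \<in> V - S. \<forall>w'\<in>V - S. gain f \<eta> S w' \<le> gain f \<eta> S w}"

text \<open>A tie-breaking rule: sel S C picks an element of the nonempty candidate set C.\<close>
definition valid_sel :: "('a set \<Rightarrow> 'a set \<Rightarrow> 'a) \<Rightarrow> bool" where
  "valid_sel sel \<longleftrightarrow> (\<forall>S C. C \<noteq> {} \<longrightarrow> sel S C \<in> C)"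

fun greedy_iter :: "('a set \<Rightarrow> real) \<Rightarrow> real \<Rightarrow> real \<Rightarrow> 'a set \<Rightarrow> ('a set \<Rightarrow> 'a set \<Rightarrow> 'a)
                     \<Rightarrow> nat \<Rightarrow> 'a set \<Rightarrow> 'a set" where
  "greedy_iter f \<eta> \<epsilon> V sel 0 S = S"
| "greedy_iter f \<eta> \<epsilon> V sel (Suc m) S =
     (if \<eta> - \<epsilon> \<le> f S \<or> V \<subseteq> S then S
      else greedy_iter f \<eta> \<epsilon> V sel m (insert (sel S (greedy_choices f \<eta> V S)) S))"

definition greedy_out :: "('a set \<Rightarrow> real) \<Rightarrow> real \<Rightarrow> real \<Rightarrow> 'a set \<Rightarrow> ('a set \<Rightarrow> 'a set \<Rightarrow> 'a)
                          \<Rightarrow> 'a set option" where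
  "greedy_out f \<eta> \<epsilon> V sel =
     (let S = greedy_iter f \<eta> \<epsilon> V sel (card V) {} in
      if \<eta> - \<epsilon> \<le> f S then Some S else None)"

definition greedy_succeeds :: "(nat \<Rightarrow> 'a set \<Rightarrow> real) \<Rightarrow> real \<Rightarrow> real \<Rightarrow> 'a set
                               \<Rightarrow> ('a set \<Rightarrow> 'a set \<Rightarrow> 'a) \<Rightarrow> real \<Rightarrow> nat \<Rightarrow> nat \<Rightarrow> bool" where
  "greedy_succeeds f \<eta> \<epsilon> V sel \<beta> k R =
     (case greedy_out (f R) \<eta> \<epsilon> V sel of
        Some S \<Rightarrow> real (card S) \<le> \<beta> * real k
      | None \<Rightarrow> False)"

definition mintime_greedy :: "(nat \<Rightarrow> 'a set \<Rightarrow> real) \<Rightarrow> real \<Rightarrow> real \<Rightarrow> 'a set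
                              \<Rightarrow> ('a set \<Rightarrow> 'a set \<Rightarrow> 'a) \<Rightarrow> real \<Rightarrow> nat \<Rightarrow> ('a set \<times> nat) option" where
  "mintime_greedy f \<eta> \<epsilon> V sel \<beta> k =
     (if \<exists>R < card V. greedy_succeeds f \<eta> \<epsilon> V sel \<beta> k R
      then (let R = (LEAST R. greedy_succeeds f \<eta> \<epsilon> V sel \<beta> k R)
            in Some (the (greedy_out (f R) \<eta> \<epsilon> V sel), R))
      else None)"

end

theory Submission
  imports Defs
begin



definition succ :: "('a \<times> 'a) set \<Rightarrow> 'a set \<Rightarrow> 'a set" where
  "succ W X = {u. \<exists>v\<in>X. (v, u) \<in> W}"

fun reachU :: "('a \<times> 'a) set \<Rightarrow> 'a set \<Rightarrow> nat \<Rightarrow> 'a set" where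
  "reachU W S 0 = S"
| "reachU W S (Suc t) = reachU W S t \<union> succ W (reachU W S t)"

lemma ic_Suc: "ic_state W S (Suc t) = (fst (ic_state W S t) \<union> (succ W (snd (ic_state W S t)) - fst (ic_state W S t)), succ W (snd (ic_state W S t)) - fst (ic_state W S t))"
  unfolding succ_def ic_state.simps(2) Let_def by (rule refl)

lemma ic_state_char:
  "fst (ic_state W S t) = reachU W S t \<and> snd (ic_state W S t) \<subseteq> reachU W S t
   \<and> succ W (reachU W S t) \<subseteq> reachU W S t \<union> succ W (snd (ic_state W S t))"
proof (induction t)
  case 0
  then show ?case by auto
next
  case (Suc t)
  define A where "A = fst (ic_state W S t)"
  define F where "F = snd (ic_state W S t)"
  have IH: "A = reachU W S t" "F \<subseteq> A" "succ W A \<subseteq> A \<union> succ W F"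
    using Suc.IH unfolding A_def F_def by auto
  have e: "ic_state W S (Suc t) = (A \<union> (succ W F - A), succ W F - A)"
    unfolding A_def F_def by (rule ic_Suc)
  have sF: "succ W F \<subseteq> succ W A" using IH(2) by (auto simp: succ_def)
  have su: "succ W (A \<union> X) = succ W A \<union> succ W X" for X by (auto simp: succ_def)
  have r: "reachU W S (Suc t) = A \<union> succ W F" using IH sF by auto
  have eq2: "A \<union> succ W F = A \<union> (succ W F - A)" by blast
  have "succ W (reachU W S (Suc t)) = succ W A \<union> succ W (succ W F - A)"
    unfolding r by (subst eq2) (rule su)
  also have "\<dots> \<subseteq> reachU W S (Suc t) \<union> succ W (succ W F - A)"
    using IH(3) unfolding r by blast
  finally have c3: "succ W (reachU W S (Suc t)) \<subseteq> reachU W S (Suc t) \<union> succ W (succ W F - A)" .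
  have c1: "A \<union> (succ W F - A) = reachU W S (Suc t)" unfolding r by blast
  have c2: "succ W F - A \<subseteq> reachU W S (Suc t)" unfolding r by blast
  show ?case unfolding e using c1 c2 c3 by simp
qed


lemma active_by_reachU: "active_by W S t = reachU W S t"
  unfolding active_by_def using ic_state_char[of W S t] by (rule conjunct1)

lemma reachU_UN: "reachU W S t = (\<Union>s\<in>S. reachU W {s} t)"
  by (induction t) (auto simp: succ_def)

lemma reachU_empty[simp]: "reachU W {} t = {}"
  by (induction t) (auto simp: succ_def)

lemma reachU_Un: "reachU W (A \<union> B) t = reachU W A t \<union> reachU W B t"
  by (induction t) (auto simp: succ_def)

lemma reachU_mono: "A \<subseteq> B \<Longrightarrow> reachU W A t \<subseteq> reachU W B t"
  by (metis reachU_Un subset_Un_eq)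

lemma reachU_sub: "W \<subseteq> V \<times> V \<Longrightarrow> S \<subseteq> V \<Longrightarrow> reachU W S t \<subseteq> V"
  by (induction t) (auto simp: succ_def)

lemma reachU_mono_t: "t \<le> t' \<Longrightarrow> reachU W S t \<subseteq> reachU W S t'"
proof (induction t' rule: dec_induct)
  case base then show ?case by simp
next
  case (step n) then show ?case by auto
qed

lemma reachU_stable: assumes h: "reachU W S t = reachU W S (Suc t)"
  shows "reachU W S (t + m) = reachU W S t"
proof (induction m)
  case 0 then show ?case by simp
next
  case (Suc m)
  have "reachU W S (t + Suc m) = reachU W S (t + m) \<union> succ W (reachU W S (t + m))"
    by simp
  also have "\<dots> = reachU W S (Suc t)" using Suc.IH by simp
  finally show ?case by (metis h)
qed

lemma reachU_card_grow:
  assumes "finite V" "W \<subseteq> V \<times> V" "S \<subseteq> V" "S \<noteq> {}"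
  shows "reachU W S t \<noteq> reachU W S (Suc t) \<Longrightarrow> t + 1 \<le> card (reachU W S t)"
proof (induction t)
  case 0
  have "finite S" using assms finite_subset by blast
  then show ?case using assms by (simp add: Suc_leI card_gt_0_iff)
next
  case (Suc t)
  have ne: "reachU W S t \<noteq> reachU W S (Suc t)"
  proof
    assume "reachU W S t = reachU W S (Suc t)"
    then have "reachU W S (Suc (Suc t)) = reachU W S (Suc t)"
      by (metis reachU.simps(2))
    with Suc.prems show False by simp
  qed
  have "reachU W S t \<subset> reachU W S (Suc t)" using ne by auto
  moreover have "finite (reachU W S (Suc t))"
    using reachU_sub[OF assms(2,3)] assms(1) finite_subset by blast
  ultimately have "card (reachU W S t) < card (reachU W S (Suc t))"
    by (rule psubset_card_mono[rotated])
  with Suc.IH[OF ne] show ?case by simp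
qed

lemma reachU_bound:
  assumes "finite V" "W \<subseteq> V \<times> V" "S \<subseteq> V"
  shows "reachU W S t \<subseteq> reachU W S (card V - 1)"
proof (cases "t \<le> card V - 1")
  case True then show ?thesis by (rule reachU_mono_t)
next
  case False
  show ?thesis
  proof (cases "S = {}")
    case True then show ?thesis by simp
  next
    case ne: False
    let ?n = "card V - 1"
    have st: "reachU W S ?n = reachU W S (Suc ?n)"
    proof (rule ccontr)
      assume h: "reachU W S ?n \<noteq> reachU W S (Suc ?n)"
      have c1: "?n + 1 \<le> card (reachU W S ?n)"
        using reachU_card_grow[OF assms ne h] .
      have "reachU W S ?n \<subset> reachU W S (Suc ?n)" using h by auto
      moreover have "finite (reachU W S (Suc ?n))"
        using reachU_sub[OF assms(2,3)] assms(1) finite_subset by blast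
      ultimately have "card (reachU W S ?n) < card (reachU W S (Suc ?n))"
        by (rule psubset_card_mono[rotated])
      moreover have "card (reachU W S (Suc ?n)) \<le> card V"
        using reachU_sub[OF assms(2,3)] assms(1) card_mono by blast
      ultimately show False using c1 by linarith
    qed
    have "t = ?n + (t - ?n)" using False by simp
    then have "reachU W S t = reachU W S ?n"
      using reachU_stable[OF st, of "t - ?n"] by metis
    then show ?thesis by simp
  qed
qed




lemma world_prob_nonneg:
  assumes "W \<subseteq> E" "\<forall>e\<in>E. 0 \<le> p e \<and> p e \<le> 1"
  shows "0 \<le> world_prob E p W"
  unfolding world_prob_def using assms
  by (intro mult_nonneg_nonneg prod_nonneg) auto

lemma sigma_alt: "sigma E p R S = (\<Sum>W\<in>Pow E. world_prob E p W * real (card (reachU W S R)))"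
  unfolding sigma_def active_by_reachU ..

lemma sigma_empty: "sigma E p R {} = 0"
  unfolding sigma_alt by simp

locale icm =
  fixes V :: "'a set" and E :: "('a \<times> 'a) set" and p :: "'a \<times> 'a \<Rightarrow> real"
  assumes finV: "finite V" and EV: "E \<subseteq> V \<times> V" and pr: "\<forall>e\<in>E. 0 \<le> p e \<and> p e \<le> 1"
begin

lemma finE: "finite E"
  using finV EV by (meson finite_SigmaI finite_subset)

lemma WV: "W \<in> Pow E \<Longrightarrow> W \<subseteq> V \<times> V" using EV by auto

lemma wp: "W \<in> Pow E \<Longrightarrow> 0 \<le> world_prob E p W"
  using world_prob_nonneg pr by blast

lemma finR: "W \<in> Pow E \<Longrightarrow> S \<subseteq> V \<Longrightarrow> finite (reachU W S R)"
  using reachU_sub[OF WV] finV finite_subset by metis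

lemma sigma_nonneg: "0 \<le> sigma E p R S"
  unfolding sigma_alt by (intro sum_nonneg mult_nonneg_nonneg wp) auto

lemma sigma_mono: "A \<subseteq> B \<Longrightarrow> B \<subseteq> V \<Longrightarrow> sigma E p R A \<le> sigma E p R B"
  unfolding sigma_alt
proof (intro sum_mono mult_left_mono)
  fix W assume W: "W \<in> Pow E" and "A \<subseteq> B" "B \<subseteq> V"
  then show "real (card (reachU W A R)) \<le> real (card (reachU W B R))"
    using card_mono[OF finR[OF W] reachU_mono] by simp
  show "0 \<le> world_prob E p W" using wp W by blast
qed

lemma sigma_t_bound: "S \<subseteq> V \<Longrightarrow> sigma E p t S \<le> sigma E p (card V - 1) S"
  unfolding sigma_alt
proof (intro sum_mono mult_left_mono)
  fix W assume W: "W \<in> Pow E" and S: "S \<subseteq> V"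
  then show "real (card (reachU W S t)) \<le> real (card (reachU W S (card V - 1)))"
    using card_mono[OF finR[OF W S] reachU_bound[OF finV WV[OF W] S]] by simp
  show "0 \<le> world_prob E p W" using wp W by blast
qed

lemma card_submod:
  assumes W: "W \<in> Pow E" and T: "T \<subseteq> V" and Q: "Q \<subseteq> V"
  shows "real (card (reachU W (T \<union> Q) R)) - real (card (reachU W T R))
     \<le> (\<Sum>w\<in>Q - T. real (card (reachU W (insert w T) R)) - real (card (reachU W T R)))"
proof -
  let ?A = "\<lambda>X. reachU W X R"
  have dif: "real (card (?A X)) - real (card (?A T)) = real (card (?A X - ?A T))"
    if "T \<subseteq> X" "X \<subseteq> V" for X
  proof -
    have "?A T \<subseteq> ?A X" using reachU_mono that by blast
    moreover have "finite (?A X)" using finR[OF W that(2)] .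
    ultimately show ?thesis by (simp add: card_Diff_subset card_mono finite_subset of_nat_diff)
  qed
  have finO: "finite Q" using Q finV finite_subset by blast
  have sub: "?A (T \<union> Q) - ?A T \<subseteq> (\<Union>w\<in>Q - T. ?A (insert w T) - ?A T)"
  proof
    fix u assume u: "u \<in> ?A (T \<union> Q) - ?A T"
    then obtain s where s: "s \<in> T \<union> Q" "u \<in> reachU W {s} R"
      using reachU_UN[of W "T \<union> Q" R] by auto
    have "s \<notin> T" using s u reachU_UN[of W T R] by auto
    then have "s \<in> Q - T" using s by auto
    moreover have "u \<in> ?A (insert s T)" using s(2) reachU_UN[of W "insert s T" R] by auto
    ultimately show "u \<in> (\<Union>w\<in>Q - T. ?A (insert w T) - ?A T)" using u by auto
  qed
  have "real (card (?A (T \<union> Q))) - real (card (?A T)) = real (card (?A (T \<union> Q) - ?A T))"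
    using dif T Q by auto
  also have "\<dots> \<le> real (card (\<Union>w\<in>Q - T. ?A (insert w T) - ?A T))"
    using card_mono[OF _ sub] finR[OF W, of "\<Union>w\<in>Q - T. insert w T"] finO T Q
    by (intro of_nat_mono card_mono[OF _ sub]) (auto intro!: finite_UN_I finR[OF W])
  also have "\<dots> \<le> real (\<Sum>w\<in>Q - T. card (?A (insert w T) - ?A T))"
    using finO by (intro of_nat_mono card_UN_le) auto
  also have "\<dots> = (\<Sum>w\<in>Q - T. real (card (?A (insert w T))) - real (card (?A T)))"
    unfolding of_nat_sum
  proof (intro sum.cong refl)
    fix w assume "w \<in> Q - T"
    then have "T \<subseteq> insert w T" "insert w T \<subseteq> V" using T Q by auto
    from dif[OF this] show "real (card (?A (insert w T) - ?A T)) = real (card (?A (insert w T))) - real (card (?A T))"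
      by simp
  qed
  finally show ?thesis .
qed

lemma sigma_submod:
  assumes T: "T \<subseteq> V" and Q: "Q \<subseteq> V"
  shows "sigma E p R (T \<union> Q) - sigma E p R T \<le> (\<Sum>w\<in>Q - T. sigma E p R (insert w T) - sigma E p R T)"
proof -
  have "sigma E p R (T \<union> Q) - sigma E p R T
     = (\<Sum>W\<in>Pow E. world_prob E p W * (real (card (reachU W (T \<union> Q) R)) - real (card (reachU W T R))))"
    unfolding sigma_alt by (simp add: sum_subtractf right_diff_distrib)
  also have "\<dots> \<le> (\<Sum>W\<in>Pow E. world_prob E p W * (\<Sum>w\<in>Q - T. real (card (reachU W (insert w T) R)) - real (card (reachU W T R))))"
    using card_submod[OF _ T Q] wp by (intro sum_mono mult_left_mono) auto
  also have "\<dots> = (\<Sum>w\<in>Q - T. sigma E p R (insert w T) - sigma E p R T)"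
    unfolding sigma_alt sum_distrib_left
    by (subst sum.swap) (simp add: sum_subtractf right_diff_distrib)
  finally show ?thesis .
qed

end



lemma choices_ne:
  assumes "finite V" "\<not> V \<subseteq> T"
  shows "greedy_choices f \<eta> V T \<noteq> {}"
proof -
  let ?A = "V - T" and ?g = "gain f \<eta> T"
  have fA: "finite ?A" "?A \<noteq> {}" using assms by auto
  have "Max (?g ` ?A) \<in> ?g ` ?A" using fA by (intro Max_in) auto
  then obtain x where x: "x \<in> ?A" "?g x = Max (?g ` ?A)" by auto
  have "\<forall>y\<in>?A. ?g y \<le> ?g x" using x fA by auto
  then have "x \<in> greedy_choices f \<eta> V T" using x unfolding greedy_choices_def by auto
  then show ?thesis by auto
qed

lemma min_scale:
  fixes x y \<eta> \<delta> :: real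
  assumes "(1-\<delta>) * x \<le> y" "0 \<le> \<delta>" "\<delta> < 1" "0 \<le> \<eta>"
  shows "(1-\<delta>) * min x \<eta> \<le> min y \<eta>"
proof (cases "x \<le> \<eta>")
  case True
  have "(1-\<delta>) * x \<le> (1-\<delta>) * \<eta>" using True assms by (intro mult_left_mono) auto
  also have "\<dots> \<le> \<eta>" using assms by (simp add: mult_le_cancel_right1 algebra_simps)
  finally show ?thesis using True assms by simp
next
  case False
  have "(1-\<delta>) * \<eta> \<le> (1-\<delta>) * x" using False assms by (intro mult_left_mono) auto
  moreover have "(1-\<delta>) * \<eta> \<le> \<eta>" using assms by (simp add: algebra_simps)
  moreover have "(1-\<delta>) * \<eta> \<le> y" using calculation assms(1) by linarith
  ultimately show ?thesis using False assms by simp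
qed

lemma greedy_bound:
  fixes f s :: "'a set \<Rightarrow> real" and V Q :: "'a set" and k j0 :: nat and \<delta> \<eta> \<epsilon> :: real
  assumes finV: "finite V" and k1: "1 \<le> k" and d0: "0 \<le> \<delta>" and d1: "\<delta> < 1"
    and d\<epsilon>: "\<delta> * \<eta> \<le> \<epsilon>" and \<eta>0: "0 \<le> \<eta>"
    and band: "\<And>S. (1-\<delta>) * s S \<le> f S \<and> f S \<le> s S"
    and mono: "\<And>A B. A \<subseteq> B \<Longrightarrow> B \<subseteq> V \<Longrightarrow> s A \<le> s B"
    and s0: "0 \<le> s {}"
    and submod: "\<And>T. T \<subseteq> V \<Longrightarrow> s (T \<union> Q) - s T \<le> (\<Sum>w\<in>Q - T. s (insert w T) - s T)"
    and QV: "Q \<subseteq> V" and Qk: "card Q \<le> k" and Q\<eta>: "\<eta> \<le> s Q"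
    and fc: "\<eta> - \<epsilon> \<le> (1-\<delta>) * (\<eta> - (1 - (1-\<delta>)/k)^j0 * \<eta> - \<delta>*\<eta>*k/(1-\<delta>))"
    and sel: "valid_sel sel"
  shows "\<exists>S. greedy_out f \<eta> \<epsilon> V sel = Some S \<and> card S \<le> j0"
proof -
  define c where "c = 1 - (1-\<delta>)/k"
  define D where "D = \<delta>*\<eta>*k/(1-\<delta>)"
  have kpos: "(0::real) < k" using k1 by simp
  have q0: "0 \<le> (1-\<delta>)/k" using d1 kpos by simp
  have q1: "(1-\<delta>)/k \<le> 1" using d0 k1 kpos by (simp add: divide_le_eq)
  have c0: "0 \<le> c" "c \<le> 1" unfolding c_def using q0 q1 by auto
  have D0: "0 \<le> D" unfolding D_def using d0 d1 \<eta>0 by simp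
  have cD: "c*D + \<delta>*\<eta> = D"
    unfolding c_def D_def using d1 kpos by (simp add: field_simps)
  have fV: "\<eta> - \<epsilon> \<le> f V"
  proof -
    have "\<eta> \<le> s V" using Q\<eta> mono[OF QV] by fastforce
    then have "(1-\<delta>) * \<eta> \<le> (1-\<delta>) * s V" using d1 by (intro mult_left_mono) auto
    then show ?thesis using band[of V] d\<epsilon> by (simp add: algebra_simps)
  qed
  have step: "\<eta> - s (insert w T) \<le> c*(\<eta> - s T) + \<delta>*\<eta>"
    if T: "T \<subseteq> V" and fT: "f T < \<eta> - \<epsilon>" and w: "w \<in> greedy_choices f \<eta> V T" for T w
  proof -
    have "(1-\<delta>) * s T < (1-\<delta>) * \<eta>" using band[of T] fT d\<epsilon> by (simp add: algebra_simps)
    then have aless: "s T < \<eta>" using d1 by simp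
    have QT: "Q - T \<noteq> {}"
    proof
      assume "Q - T = {}"
      then have "Q \<subseteq> T" by auto
      then have "s Q \<le> s T" using mono T by blast
      then show False using Q\<eta> aless by simp
    qed
    have finQT: "finite (Q - T)" using QV finV finite_subset by blast
    have "\<exists>w'\<in>Q - T. (\<eta> - s T)/k \<le> min (s (insert w' T)) \<eta> - s T"
    proof (rule ccontr)
      assume "\<not> ?thesis"
      then have lt: "\<forall>w'\<in>Q - T. min (s (insert w' T)) \<eta> - s T < (\<eta> - s T)/k" by (auto simp: not_le)
      have le1: "(\<eta> - s T)/k \<le> \<eta> - s T" using aless k1 by (simp add: divide_le_eq mult_le_cancel_left1)
      have lt2: "\<forall>w'\<in>Q - T. s (insert w' T) - s T < (\<eta> - s T)/k"
      proof
        fix w' assume w': "w' \<in> Q - T"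
        show "s (insert w' T) - s T < (\<eta> - s T)/k"
        proof (cases "s (insert w' T) \<le> \<eta>")
          case True
          have "min (s (insert w' T)) \<eta> - s T < (\<eta> - s T)/k" using lt w' by blast
          then show ?thesis using True by (simp add: min_def)
        next
          case False
          have "min (s (insert w' T)) \<eta> - s T < (\<eta> - s T)/k" using lt w' by blast
          then show ?thesis using False le1 by (simp add: min_def)
        qed
      qed
      have "(\<Sum>w\<in>Q - T. s (insert w T) - s T) < (\<Sum>w\<in>Q - T. (\<eta> - s T)/k)"
        using lt2 finQT QT by (intro sum_strict_mono) auto
      also have "\<dots> = real (card (Q - T)) * ((\<eta> - s T)/k)" by simp
      also have "\<dots> \<le> real k * ((\<eta> - s T)/k)"
      proof (intro mult_right_mono)
        have "card (Q - T) \<le> card Q" using QV finV finite_subset by (intro card_mono) auto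
        then show "real (card (Q - T)) \<le> real k" using Qk by simp
        show "0 \<le> (\<eta> - s T)/k" using aless by simp
      qed
      also have "\<dots> = \<eta> - s T" using kpos by simp
      also have "\<dots> \<le> s (T \<union> Q) - s T" using mono[of Q "T \<union> Q"] QV T Q\<eta> by auto
      also have "\<dots> \<le> (\<Sum>w\<in>Q - T. s (insert w T) - s T)" using submod[OF T] .
      finally show False by simp
    qed
    then obtain w' where w': "w' \<in> Q - T" "(\<eta> - s T)/k \<le> min (s (insert w' T)) \<eta> - s T" by blast
    have "w' \<in> V - T" using w' QV by auto
    then have "gain f \<eta> T w' \<le> gain f \<eta> T w" using w unfolding greedy_choices_def by auto
    then have g: "min (f (insert w' T)) \<eta> \<le> min (f (insert w T)) \<eta>" unfolding gain_def by simp
    have "(1-\<delta>) * min (s (insert w' T)) \<eta> \<le> min (f (insert w' T)) \<eta>"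
      using band[of "insert w' T"] d0 d1 \<eta>0 by (intro min_scale) auto
    moreover have "(1-\<delta>) * (s T + (\<eta> - s T)/k) \<le> (1-\<delta>) * min (s (insert w' T)) \<eta>"
      using w'(2) d1 by (intro mult_left_mono) auto
    moreover have "min (f (insert w T)) \<eta> \<le> s (insert w T)" using band[of "insert w T"] min.coboundedI1 by blast
    ultimately have big: "(1-\<delta>) * (s T + (\<eta> - s T)/k) \<le> s (insert w T)" using g by linarith
    have "\<eta> - s (insert w T) \<le> \<eta> - (1-\<delta>) * (s T + (\<eta> - s T)/k)" using big by simp
    also have "\<dots> = c*(\<eta> - s T) + \<delta> * s T"
      unfolding c_def using kpos by (simp add: field_simps)
    also have "\<dots> \<le> c*(\<eta> - s T) + \<delta> * \<eta>" using aless d0 by (simp add: mult_left_mono)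
    finally show ?thesis .
  qed
  have stop: "\<eta> - \<epsilon> \<le> f T"
    if T: "T \<subseteq> V" and inv: "\<eta> - s T \<le> c^card T * \<eta> + D" and j: "j0 \<le> card T" for T
  proof -
    have "c^card T \<le> c^j0" using c0 j by (intro power_decreasing) auto
    then have "c^card T * \<eta> \<le> c^j0 * \<eta>" using \<eta>0 by (intro mult_right_mono) auto
    then have "\<eta> - c^j0 * \<eta> - D \<le> s T" using inv by linarith
    then have "(1-\<delta>) * (\<eta> - c^j0 * \<eta> - D) \<le> (1-\<delta>) * s T" using d1 by (intro mult_left_mono) auto
    then show ?thesis using fc band[of T] unfolding c_def D_def by linarith
  qed
  have iter: "greedy_iter f \<eta> \<epsilon> V sel m T \<subseteq> V \<and> card (greedy_iter f \<eta> \<epsilon> V sel m T) \<le> j0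
      \<and> \<eta> - s (greedy_iter f \<eta> \<epsilon> V sel m T) \<le> c^card (greedy_iter f \<eta> \<epsilon> V sel m T) * \<eta> + D
      \<and> (card V \<le> card T + m \<longrightarrow> \<eta> - \<epsilon> \<le> f (greedy_iter f \<eta> \<epsilon> V sel m T))"
    if "T \<subseteq> V" "\<eta> - s T \<le> c^card T * \<eta> + D" "card T \<le> j0" for m T
    using that
  proof (induction m arbitrary: T)
    case 0
    have "card V \<le> card T \<Longrightarrow> T = V" using 0 finV by (metis card_seteq)
    then show ?case using 0 fV by auto
  next
    case (Suc m)
    show ?case
    proof (cases "\<eta> - \<epsilon> \<le> f T \<or> V \<subseteq> T")
      case True
      then have "V \<subseteq> T \<Longrightarrow> T = V" using Suc.prems by auto
      then show ?thesis using True Suc.prems fV by auto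
    next
      case False
      define w where "w = sel T (greedy_choices f \<eta> V T)"
      have wc: "w \<in> greedy_choices f \<eta> V T"
      proof -
        have "greedy_choices f \<eta> V T \<noteq> {}" using choices_ne[OF finV] False by blast
        then show ?thesis using sel unfolding w_def valid_sel_def by blast
      qed
      then have wVT: "w \<in> V - T" unfolding greedy_choices_def by auto
      have finT: "finite T" using Suc.prems(1) finV finite_subset by blast
      have cardi: "card (insert w T) = card T + 1" using wVT finT by simp
      have "card T \<noteq> j0"
      proof
        assume "card T = j0"
        then have "\<eta> - \<epsilon> \<le> f T" using stop[OF Suc.prems(1,2)] by simp
        then show False using False by simp
      qed
      then have c1: "card (insert w T) \<le> j0" using cardi Suc.prems(3) by simp
      have "\<eta> - s (insert w T) \<le> c*(\<eta> - s T) + \<delta>*\<eta>"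
        using step[OF Suc.prems(1) _ wc] False by simp
      also have "\<dots> \<le> c*(c^card T * \<eta> + D) + \<delta>*\<eta>"
        using Suc.prems(2) c0 by (simp add: mult_left_mono)
      also have "\<dots> = c^card (insert w T) * \<eta> + D"
        using cD cardi by (simp add: algebra_simps)
      finally have inv: "\<eta> - s (insert w T) \<le> c^card (insert w T) * \<eta> + D" .
      have sub: "insert w T \<subseteq> V" using wVT Suc.prems(1) by auto
      have e: "greedy_iter f \<eta> \<epsilon> V sel (Suc m) T = greedy_iter f \<eta> \<epsilon> V sel m (insert w T)"
        using False unfolding w_def by simp
      show ?thesis unfolding e using Suc.IH[OF sub inv c1] cardi by simp
    qed
  qed
  have "\<eta> - s {} \<le> c^card ({}::'a set) * \<eta> + D" using s0 D0 by simp
  from iter[OF _ this, of "card V"] obtain S where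
    S: "greedy_iter f \<eta> \<epsilon> V sel (card V) {} = S" "card S \<le> j0" "\<eta> - \<epsilon> \<le> f S" by auto
  then show ?thesis unfolding greedy_out_def Let_def by auto
qed




lemma pow_exp_bound:
  fixes y :: real assumes "0 \<le> y" "y \<le> 1"
  shows "(1 - y)^j \<le> exp (- (y * real j))"
proof -
  have "1 - y \<le> exp (- y)" using exp_ge_add_one_self[of "-y"] by simp
  then have "(1 - y)^j \<le> (exp (- y))^j" using assms by (intro power_mono) auto
  also have "\<dots> = exp (real j * (- y))" by (rule exp_of_nat_mult[symmetric])
  finally show ?thesis by (simp add: mult.commute)
qed

lemma fc_lemma:
  fixes k j0 :: nat and \<delta> \<eta> \<epsilon> \<phi> :: real
  assumes e0: "0 < \<epsilon>" and e\<eta>: "\<epsilon> \<le> \<eta>" and k1: "1 \<le> k" and d0: "0 \<le> \<delta>" and d1: "\<delta> < 1"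
    and p0: "0 \<le> \<phi>"
    and j0: "j0 = nat \<lfloor>(1+\<phi>) * (1 + ln (\<eta>/\<epsilon>)) * real k\<rfloor>"
    and c1: "\<delta> * (ln (\<eta>/\<epsilon>) + \<phi>) \<le> \<phi>/2"
    and c2: "\<delta> * \<eta> * (real k + 1) \<le> \<epsilon> * (1 - exp (-\<phi>/2))"
  shows "\<eta> - \<epsilon> \<le> (1-\<delta>) * (\<eta> - (1 - (1-\<delta>)/k)^j0 * \<eta> - \<delta>*\<eta>*k/(1-\<delta>))"
proof -
  define lr where "lr = ln (\<eta>/\<epsilon>)"
  define c where "c = 1 - (1-\<delta>)/k"
  define e where "e = exp (-\<phi>/2)"
  define B where "B = (1+\<phi>) * (1 + lr)"
  have \<eta>0: "0 < \<eta>" using e0 e\<eta> by simp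
  have lr0: "0 \<le> lr" unfolding lr_def using e0 e\<eta> by simp
  have kpos: "(0::real) < k" using k1 by simp
  have B1: "1 \<le> B" unfolding B_def using p0 lr0
    by (metis add_increasing2 le_add_same_cancel1 mult_1 mult_mono zero_le_one)
  have Bk: "0 \<le> B * k" using B1 by simp
  have j0r: "B * k - 1 \<le> real j0" unfolding j0 B_def lr_def
    using Bk[unfolded B_def lr_def] by linarith
  have "(B * k - 1)/k \<le> real j0 / k" using j0r kpos by (intro divide_right_mono) auto
  moreover have "(B * k - 1)/k = B - 1/k" using kpos by (simp add: field_simps)
  ultimately have "real j0 / k \<ge> B - 1/k" by simp
  moreover have "1/real k \<le> 1" using k1 by simp
  ultimately have "real j0 / k \<ge> B - 1" by linarith
  moreover have "B - 1 \<ge> lr + \<phi>" unfolding B_def using p0 lr0 by (simp add: algebra_simps)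
  ultimately have jk: "real j0 / k \<ge> lr + \<phi>" by linarith
  have "(1-\<delta>) * (real j0 / k) \<ge> (1-\<delta>) * (lr + \<phi>)" using jk d1 by (intro mult_left_mono) auto
  moreover have "(1-\<delta>) * (lr + \<phi>) \<ge> lr + \<phi>/2" using c1 unfolding lr_def by (simp add: algebra_simps)
  ultimately have ex: "(1-\<delta>)/k * real j0 \<ge> lr + \<phi>/2" by simp
  have y0: "0 \<le> (1-\<delta>)/k" using d1 kpos by simp
  have y1: "(1-\<delta>)/k \<le> 1" using d0 k1 kpos by (simp add: divide_le_eq)
  have "c^j0 \<le> exp (- ((1-\<delta>)/k * real j0))" unfolding c_def by (rule pow_exp_bound[OF y0 y1])
  also have "\<dots> \<le> exp (- (lr + \<phi>/2))" using ex by simp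
  also have "\<dots> = exp (- lr) * e" unfolding e_def by (simp add: exp_add[symmetric])
  also have "exp (- lr) = \<epsilon> / \<eta>" unfolding lr_def using e0 \<eta>0 by (simp add: exp_minus)
  finally have cj: "c^j0 \<le> \<epsilon> / \<eta> * e" .
  have cjn: "0 \<le> c^j0" unfolding c_def using y1 by simp
  have cje: "c^j0 * \<eta> \<le> \<epsilon> * e" using cj \<eta>0 by (simp add: field_simps)
  have DD: "(1-\<delta>) * (\<delta>*\<eta>*k/(1-\<delta>)) = \<delta>*\<eta>*k" using d1 by simp
  have "(1-\<delta>) * (\<eta> - c^j0 * \<eta> - \<delta>*\<eta>*k/(1-\<delta>)) = (1-\<delta>)*\<eta> - (1-\<delta>)*(c^j0*\<eta>) - \<delta>*\<eta>*k"
    using DD by (simp add: algebra_simps)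
  also have "\<dots> \<ge> \<eta> - \<delta>*\<eta>*(real k + 1) - \<epsilon> * e"
  proof -
    have "(1-\<delta>)*(c^j0*\<eta>) \<le> c^j0*\<eta>" using d0 cjn \<eta>0 by (simp add: mult_le_cancel_right1 algebra_simps)
    then show ?thesis using cje by (simp add: algebra_simps)
  qed
  finally have "(1-\<delta>) * (\<eta> - c^j0 * \<eta> - \<delta>*\<eta>*k/(1-\<delta>)) \<ge> \<eta> - \<delta>*\<eta>*(real k + 1) - \<epsilon> * e" .
  moreover have "\<delta>*\<eta>*(real k + 1) + \<epsilon> * e \<le> \<epsilon>" using c2 unfolding e_def by (simp add: algebra_simps)
  ultimately show ?thesis unfolding c_def by linarith
qed




lemma mintime_out:
  fixes f :: "nat \<Rightarrow> 'a set \<Rightarrow> real"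
  assumes le: "\<And>R S. f R S \<le> sigma E p R S" and R0: "R0 < card V"
    and suc: "greedy_succeeds f \<eta> \<epsilon> V sel \<beta> k R0" and \<eta>0: "0 < \<eta>"
  shows "\<exists>S R. mintime_greedy f \<eta> \<epsilon> V sel \<beta> k = Some (S, R)
           \<and> real (card S) \<le> \<beta> * real k
           \<and> real R \<le> 1 * real R0
           \<and> (1 - \<epsilon> / \<eta>) * \<eta> \<le> sigma E p R S"
proof -
  define R where "R = (LEAST R. greedy_succeeds f \<eta> \<epsilon> V sel \<beta> k R)"
  have ex: "\<exists>R < card V. greedy_succeeds f \<eta> \<epsilon> V sel \<beta> k R" using R0 suc by blast
  have RR0: "R \<le> R0" unfolding R_def using suc by (rule Least_le)
  have sR: "greedy_succeeds f \<eta> \<epsilon> V sel \<beta> k R" unfolding R_def using suc by (rule LeastI)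
  then obtain S where S: "greedy_out (f R) \<eta> \<epsilon> V sel = Some S" "real (card S) \<le> \<beta> * real k"
    unfolding greedy_succeeds_def by (auto split: option.splits)
  have "\<eta> - \<epsilon> \<le> f R S" using S(1) unfolding greedy_out_def Let_def by (auto split: if_splits)
  then have "\<eta> - \<epsilon> \<le> sigma E p R S" using le[of R S] by linarith
  moreover have "(1 - \<epsilon> / \<eta>) * \<eta> = \<eta> - \<epsilon>" using \<eta>0 by (simp add: field_simps)
  moreover have "mintime_greedy f \<eta> \<epsilon> V sel \<beta> k = Some (S, R)"
    unfolding mintime_greedy_def using ex S(1) by (simp add: R_def[symmetric])
  ultimately show ?thesis using S(2) RR0 by auto
qed




theorem theorem6:
  fixes V :: "'a set" and E :: "('a \<times> 'a) set" and p :: "'a \<times> 'a \<Rightarrow> real"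
    and k :: nat and \<eta> \<epsilon> :: real
  assumes "finite V"
    and "E \<subseteq> V \<times> V"
    and "\<forall>e\<in>E. 0 \<le> p e \<and> p e \<le> 1"
    and "\<eta> \<le> real (card V)"
    and "0 < \<epsilon>" and "\<epsilon> \<le> \<eta>"
    and "\<exists>t S. S \<subseteq> V \<and> card S \<le> k \<and> \<eta> \<le> sigma E p t S"
  shows
    "(\<forall>sel. valid_sel sel \<longrightarrow>
        (\<exists>S R. mintime_greedy (\<lambda>R. sigma E p R) \<eta> \<epsilon> V sel (1 + ln (\<eta> / \<epsilon>)) k = Some (S, R)
           \<and> real (card S) \<le> (1 + ln (\<eta> / \<epsilon>)) * real k
           \<and> real R \<le> 1 * real (R_opt V E p k \<eta>)
           \<and> (1 - \<epsilon> / \<eta>) * \<eta> \<le> sigma E p R S))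
     \<and>
     (\<forall>\<phi>>0. \<exists>\<delta>>0. \<forall>\<sigma>' :: nat \<Rightarrow> 'a set \<Rightarrow> real.
        (\<forall>R S. (1 - \<delta>) * sigma E p R S \<le> \<sigma>' R S \<and> \<sigma>' R S \<le> sigma E p R S) \<longrightarrow>
        (\<forall>sel. valid_sel sel \<longrightarrow>
          (\<exists>S R. mintime_greedy \<sigma>' \<eta> \<epsilon> V sel ((1 + \<phi>) * (1 + ln (\<eta> / \<epsilon>))) k = Some (S, R)
             \<and> real (card S) \<le> (1 + \<phi>) * (1 + ln (\<eta> / \<epsilon>)) * real k
             \<and> real R \<le> 1 * real (R_opt V E p k \<eta>)
             \<and> (1 - \<epsilon> / \<eta>) * \<eta> \<le> sigma E p R S)))"
proof -
  note finV = assms(1) and EV = assms(2) and pr = assms(3) and e0 = assms(5) and e\<eta> = assms(6)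
  interpret icm V E p using finV EV pr by unfold_locales
  have \<eta>0: "0 < \<eta>" using e0 e\<eta> by simp
  obtain t Q0 where Q0: "Q0 \<subseteq> V" "card Q0 \<le> k" "\<eta> \<le> sigma E p t Q0" using assms(7) by blast
  have k1: "1 \<le> k"
  proof (rule ccontr)
    assume "\<not> 1 \<le> k"
    then have "card Q0 = 0" using Q0 by simp
    moreover have "finite Q0" using Q0(1) finV finite_subset by blast
    ultimately have "Q0 = {}" by simp
    then show False using Q0(3) \<eta>0 sigma_empty[of E p t] by simp
  qed
  define R0 where "R0 = R_opt V E p k \<eta>"
  have exR0: "\<exists>S\<subseteq>V. card S \<le> k \<and> \<eta> \<le> sigma E p R0 S"
    unfolding R0_def R_opt_def by (rule LeastI_ex) (use Q0 in blast)
  have "\<eta> \<le> sigma E p (card V - 1) Q0" using Q0 sigma_t_bound[OF Q0(1), of t] by linarith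
  then have "R0 \<le> card V - 1" unfolding R0_def R_opt_def using Q0 by (intro Least_le) blast
  moreover have "card V \<noteq> 0" using assms(4) \<eta>0 by auto
  ultimately have R0V: "R0 < card V" by linarith
  obtain Q where Q: "Q \<subseteq> V" "card Q \<le> k" "\<eta> \<le> sigma E p R0 Q" using exR0 by blast
  have smono: "\<And>A B. A \<subseteq> B \<Longrightarrow> B \<subseteq> V \<Longrightarrow> sigma E p R0 A \<le> sigma E p R0 B"
    using sigma_mono by blast
  have s0: "0 \<le> sigma E p R0 {}" by (simp add: sigma_empty)
  have smod: "\<And>T. T \<subseteq> V \<Longrightarrow> sigma E p R0 (T \<union> Q) - sigma E p R0 T
     \<le> (\<Sum>w\<in>Q - T. sigma E p R0 (insert w T) - sigma E p R0 T)"
    using sigma_submod Q(1) by blast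
  have jle: "real (nat \<lfloor>(1+\<phi>) * (1 + ln (\<eta>/\<epsilon>)) * real k\<rfloor>) \<le> (1+\<phi>) * (1 + ln (\<eta>/\<epsilon>)) * real k"
    if "0 \<le> \<phi>" for \<phi>
  proof -
    have "0 \<le> ln (\<eta>/\<epsilon>)" using e0 e\<eta> by simp
    then have "0 \<le> (1+\<phi>) * (1 + ln (\<eta>/\<epsilon>)) * real k" using that by simp
    then show ?thesis by linarith
  qed
  show ?thesis
  proof
    show "\<forall>sel. valid_sel sel \<longrightarrow>
        (\<exists>S R. mintime_greedy (\<lambda>R. sigma E p R) \<eta> \<epsilon> V sel (1 + ln (\<eta> / \<epsilon>)) k = Some (S, R)
           \<and> real (card S) \<le> (1 + ln (\<eta> / \<epsilon>)) * real k
           \<and> real R \<le> 1 * real (R_opt V E p k \<eta>)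
           \<and> (1 - \<epsilon> / \<eta>) * \<eta> \<le> sigma E p R S)"
    proof (intro allI impI)
      fix sel :: "'a set \<Rightarrow> 'a set \<Rightarrow> 'a" assume sel: "valid_sel sel"
      define j0 where "j0 = nat \<lfloor>(1+0) * (1 + ln (\<eta>/\<epsilon>)) * real k\<rfloor>"
      have fc: "\<eta> - \<epsilon> \<le> (1-0) * (\<eta> - (1 - (1-0)/k)^j0 * \<eta> - 0*\<eta>*k/(1-0))"
        by (rule fc_lemma[OF e0 e\<eta> k1 _ _ _ j0_def]) auto
      have "\<exists>S. greedy_out (sigma E p R0) \<eta> \<epsilon> V sel = Some S \<and> card S \<le> j0"
        by (rule greedy_bound[OF finV k1 _ _ _ _ _ smono s0 smod Q fc sel])
          (use \<eta>0 e0 in auto)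
      then obtain S where S: "greedy_out (sigma E p R0) \<eta> \<epsilon> V sel = Some S" "card S \<le> j0" by blast
      have "real (card S) \<le> (1 + ln (\<eta> / \<epsilon>)) * real k"
        using S(2) jle[of 0] unfolding j0_def by simp
      then have suc: "greedy_succeeds (\<lambda>R. sigma E p R) \<eta> \<epsilon> V sel (1 + ln (\<eta> / \<epsilon>)) k R0"
        unfolding greedy_succeeds_def using S(1) by simp
      show "\<exists>S R. mintime_greedy (\<lambda>R. sigma E p R) \<eta> \<epsilon> V sel (1 + ln (\<eta> / \<epsilon>)) k = Some (S, R)
           \<and> real (card S) \<le> (1 + ln (\<eta> / \<epsilon>)) * real k
           \<and> real R \<le> 1 * real (R_opt V E p k \<eta>)
           \<and> (1 - \<epsilon> / \<eta>) * \<eta> \<le> sigma E p R S"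
        using mintime_out[of "\<lambda>R. sigma E p R" E p, OF _ R0V suc \<eta>0] unfolding R0_def by simp
    qed
  next
    show "\<forall>\<phi>>0. \<exists>\<delta>>0. \<forall>\<sigma>' :: nat \<Rightarrow> 'a set \<Rightarrow> real.
        (\<forall>R S. (1 - \<delta>) * sigma E p R S \<le> \<sigma>' R S \<and> \<sigma>' R S \<le> sigma E p R S) \<longrightarrow>
        (\<forall>sel. valid_sel sel \<longrightarrow>
          (\<exists>S R. mintime_greedy \<sigma>' \<eta> \<epsilon> V sel ((1 + \<phi>) * (1 + ln (\<eta> / \<epsilon>))) k = Some (S, R)
             \<and> real (card S) \<le> (1 + \<phi>) * (1 + ln (\<eta> / \<epsilon>)) * real k
             \<and> real R \<le> 1 * real (R_opt V E p k \<eta>)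
             \<and> (1 - \<epsilon> / \<eta>) * \<eta> \<le> sigma E p R S))"
    proof (intro allI impI)
      fix \<phi> :: real assume \<phi>: "0 < \<phi>"
      define lr where "lr = ln (\<eta>/\<epsilon>)"
      define e where "e = exp (-\<phi>/2)"
      have lr0: "0 \<le> lr" unfolding lr_def using e0 e\<eta> by simp
      have e1: "e < 1" unfolding e_def using \<phi> by simp
      define \<delta> where "\<delta> = min (min (1/2) (\<epsilon>/\<eta>)) (min (\<phi>/(2*(lr+\<phi>))) (\<epsilon>*(1-e)/(\<eta>*(real k+1))))"
      have dpos: "0 < \<delta>" unfolding \<delta>_def using \<phi> lr0 e0 \<eta>0 e1 by auto
      have d1: "\<delta> < 1" unfolding \<delta>_def by linarith
      have d\<epsilon>: "\<delta> * \<eta> \<le> \<epsilon>"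
      proof -
        have "\<delta> \<le> \<epsilon>/\<eta>" unfolding \<delta>_def by linarith
        then show ?thesis using \<eta>0 by (simp add: pos_le_divide_eq)
      qed
      have c1: "\<delta> * (ln (\<eta>/\<epsilon>) + \<phi>) \<le> \<phi>/2"
      proof -
        have "\<delta> \<le> \<phi>/(2*(lr+\<phi>))" unfolding \<delta>_def by linarith
        moreover have "0 < lr + \<phi>" using lr0 \<phi> by simp
        ultimately show ?thesis unfolding lr_def[symmetric] by (simp add: pos_le_divide_eq field_simps)
      qed
      have c2: "\<delta> * \<eta> * (real k + 1) \<le> \<epsilon> * (1 - exp (-\<phi>/2))"
      proof -
        have "\<delta> \<le> \<epsilon>*(1-e)/(\<eta>*(real k+1))" unfolding \<delta>_def by linarith
        moreover have "0 < \<eta>*(real k+1)" using \<eta>0 by simp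
        ultimately have "\<delta> * (\<eta>*(real k+1)) \<le> \<epsilon>*(1-e)" by (simp add: pos_le_divide_eq)
        then show ?thesis unfolding e_def by (simp add: algebra_simps)
      qed
      show "\<exists>\<delta>>0. \<forall>\<sigma>' :: nat \<Rightarrow> 'a set \<Rightarrow> real.
        (\<forall>R S. (1 - \<delta>) * sigma E p R S \<le> \<sigma>' R S \<and> \<sigma>' R S \<le> sigma E p R S) \<longrightarrow>
        (\<forall>sel. valid_sel sel \<longrightarrow>
          (\<exists>S R. mintime_greedy \<sigma>' \<eta> \<epsilon> V sel ((1 + \<phi>) * (1 + ln (\<eta> / \<epsilon>))) k = Some (S, R)
             \<and> real (card S) \<le> (1 + \<phi>) * (1 + ln (\<eta> / \<epsilon>)) * real k
             \<and> real R \<le> 1 * real (R_opt V E p k \<eta>)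
             \<and> (1 - \<epsilon> / \<eta>) * \<eta> \<le> sigma E p R S))"
      proof (intro exI[of _ \<delta>] conjI dpos allI impI)
        fix \<sigma>' :: "nat \<Rightarrow> 'a set \<Rightarrow> real" and sel :: "'a set \<Rightarrow> 'a set \<Rightarrow> 'a"
        assume band: "\<forall>R S. (1 - \<delta>) * sigma E p R S \<le> \<sigma>' R S \<and> \<sigma>' R S \<le> sigma E p R S"
          and sel: "valid_sel sel"
        define j0 where "j0 = nat \<lfloor>(1+\<phi>) * (1 + ln (\<eta>/\<epsilon>)) * real k\<rfloor>"
        have fc: "\<eta> - \<epsilon> \<le> (1-\<delta>) * (\<eta> - (1 - (1-\<delta>)/k)^j0 * \<eta> - \<delta>*\<eta>*k/(1-\<delta>))"
          by (rule fc_lemma[OF e0 e\<eta> k1 _ d1 _ j0_def c1 c2]) (use dpos \<phi> in auto)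
        have "\<exists>S. greedy_out (\<sigma>' R0) \<eta> \<epsilon> V sel = Some S \<and> card S \<le> j0"
          by (rule greedy_bound[OF finV k1 _ d1 d\<epsilon> _ _ smono s0 smod Q fc sel])
            (use \<eta>0 dpos band in auto)
        then obtain S where S: "greedy_out (\<sigma>' R0) \<eta> \<epsilon> V sel = Some S" "card S \<le> j0" by blast
        have "real (card S) \<le> (1+\<phi>) * (1 + ln (\<eta> / \<epsilon>)) * real k"
          using S(2) jle[of \<phi>] \<phi> unfolding j0_def by simp
        then have suc: "greedy_succeeds \<sigma>' \<eta> \<epsilon> V sel ((1+\<phi>) * (1 + ln (\<eta> / \<epsilon>))) k R0"
          unfolding greedy_succeeds_def using S(1) by simp
        show "\<exists>S R. mintime_greedy \<sigma>' \<eta> \<epsilon> V sel ((1 + \<phi>) * (1 + ln (\<eta> / \<epsilon>))) k = Some (S, R)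
             \<and> real (card S) \<le> (1 + \<phi>) * (1 + ln (\<eta> / \<epsilon>)) * real k
             \<and> real R \<le> 1 * real (R_opt V E p k \<eta>)
             \<and> (1 - \<epsilon> / \<eta>) * \<eta> \<le> sigma E p R S"
          using mintime_out[of \<sigma>' E p, OF _ R0V suc \<eta>0] band unfolding R0_def by simp
      qed
    qed
  qed
qed


end
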